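(* Let $1<n\le d$. Let $\mathrm{Stationary}:(\mathbb{R}^d)^{n+1}\to\{\mathsf{true},\mathsf{false}\}$ be a first-order stationarity condition that is necessary, i.e. for every smooth preference function $f_0:\mathbb{R}^d\to\mathbb{R}$, every collection of smooth strongly convex objectives $f_1,\dots,f_n:\mathbb{R}^d\to\mathbb{R}$, and every $x$ that is preference optimal for $(f_0,f_1,\dots,f_n)$, one has $\mathrm{Stationary}(\nabla f_0(x),\nabla f_1(x),\dots,\nabla f_n(x))=\mathsf{true}$. Then $\mathrm{Stationary}$ is trivial in the following sense: for any preference generic set of vectors $v_0,\dots,v_n\in\mathbb{R}^d$, $\mathrm{Stationary}(v_0,\dots,v_n)=\mathsf{true}$.
   Context: $\Delta^{n-1}$ is the simplex of convex weights in $\mathbb{R}^n$. For objectives $F=(f_1,\dots,f_n)$, a point $x$ is Pareto optimal if for all $x'$, $f_i(x')<f_i(x)$ for some $i$ implies $f_j(x')>f_j(x)$ for some $j$; $\mathrm{Pareto}(F)$ denotes the set of Pareto optimal points. A point $x\in\mathrm{Pareto}(F)$ is preference optimal (for preference $f_0$) if $f_0(x)\le f_0(x')$ for all $x'\in\mathrm{Pareto}(F)$. A set $\{v_0,v_1,\dots,v_n\}\subset\mathbb{R}^d$ with $1<n\le d$ is preference generic if there is a unique $\beta\in\Delta^{n-1}$ with $\beta_1v_1+\dots+\beta_nv_n=0$, and $v_0\notin\mathrm{span}(v_1,\dots,v_n)$. *)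

theory Defs
  imports "HOL-Analysis.Analysis"
begin

coinductive smooth_fun :: "(real^'d \<Rightarrow> real) \<Rightarrow> bool" where
  "(\<forall>x. (f has_derivative (\<lambda>h. G x \<bullet> h)) (at x)) \<Longrightarrow> (\<forall>i. smooth_fun (\<lambda>x. G x $ i))
   \<Longrightarrow> smooth_fun f"

definition strongly_convex :: "(real^'d \<Rightarrow> real) \<Rightarrow> bool" where
  "strongly_convex f \<longleftrightarrow> (\<exists>m>0. convex_on UNIV (\<lambda>x. f x - m / 2 * (norm x)\<^sup>2))"

definition Pareto :: "('n \<Rightarrow> 'a \<Rightarrow> real) \<Rightarrow> 'a set" where
  "Pareto F = {x. \<forall>x'. (\<exists>i. F i x' < F i x) \<longrightarrow> (\<exists>j. F j x' > F j x)}"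

definition preference_optimal :: "('a \<Rightarrow> real) \<Rightarrow> ('n \<Rightarrow> 'a \<Rightarrow> real) \<Rightarrow> 'a \<Rightarrow> bool" where
  "preference_optimal f0 F x \<longleftrightarrow> x \<in> Pareto F \<and> (\<forall>x'\<in>Pareto F. f0 x \<le> f0 x')"

definition weight_simplex :: "('n::finite \<Rightarrow> real) set" where
  "weight_simplex = {\<beta>. (\<forall>i. 0 \<le> \<beta> i) \<and> (\<Sum>i\<in>UNIV. \<beta> i) = 1}"

definition preference_generic :: "real^'d \<Rightarrow> ('n::finite \<Rightarrow> real^'d) \<Rightarrow> bool" where
  "preference_generic v0 v \<longleftrightarrow>
     (\<exists>!\<beta>. \<beta> \<in> weight_simplex \<and> (\<Sum>i\<in>UNIV. \<beta> i *\<^sub>R v i) = 0) \<and> v0 \<notin> span (range v)"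

end

theory Submission imports Defs begin

definition quadf :: "real \<Rightarrow> real^'d \<Rightarrow> real \<Rightarrow> real^'d \<Rightarrow> real^'d \<Rightarrow> real" where
  "quadf a b c k = (\<lambda>x. a + b \<bullet> x + c * (x \<bullet> x) + (k \<bullet> x)^2)"

lemma quadf_deriv:
  "(quadf a b c k has_derivative (\<lambda>h. (b + (2*c) *\<^sub>R x + (2*(k \<bullet> x)) *\<^sub>R k) \<bullet> h)) (at x)"
proof -
  have "((\<lambda>x. a + b \<bullet> x + c * (x \<bullet> x) + (k \<bullet> x)^2) has_derivative
     (\<lambda>h. 0 + b \<bullet> h + c * (h \<bullet> x + x \<bullet> h) + real 2 * (k \<bullet> x) ^ (2 - 1) * (k \<bullet> h))) (at x)"
    by (auto intro!: derivative_eq_intros)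
  moreover have "(\<lambda>h. 0 + b \<bullet> h + c * (h \<bullet> x + x \<bullet> h) + real 2 * (k \<bullet> x) ^ (2 - 1) * (k \<bullet> h))
     = (\<lambda>h. (b + (2*c) *\<^sub>R x + (2*(k \<bullet> x)) *\<^sub>R k) \<bullet> h)"
    by (auto simp: inner_add_left inner_commute algebra_simps)
  ultimately show ?thesis unfolding quadf_def by simp
qed

lemma quadf_comp:
  "(\<lambda>x. (b + (2*c) *\<^sub>R x + (2*(k \<bullet> x)) *\<^sub>R k) $ i)
    = quadf (b $ i) ((2*c) *\<^sub>R axis i 1 + (2 * k $ i) *\<^sub>R k) 0 0"
  by (auto simp: quadf_def cart_eq_inner_axis[of x i for x] inner_add_left inner_commute algebra_simps)

lemma quadf_smooth: "smooth_fun (quadf a b c k)"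
proof -
  have "\<exists>a b c k. f = quadf a b c k \<Longrightarrow> smooth_fun f" for f :: "real^'d \<Rightarrow> real"
  proof (coinduction arbitrary: f rule: smooth_fun.coinduct)
    case (smooth_fun f)
    then obtain a b c k where f: "f = quadf a b c k" by blast
    show ?case
      apply (rule exI[of _ f], simp)
      apply (rule exI[of _ "\<lambda>x. b + (2*c) *\<^sub>R x + (2*(k \<bullet> x)) *\<^sub>R k"])
      using quadf_deriv[of a b c k] quadf_comp[of b c k] f by blast
  qed
  then show ?thesis by blast
qed

lemma convex_lin_sq: "convex_on UNIV (\<lambda>x::real^'d. b \<bullet> x + (k \<bullet> x)^2)"
  unfolding convex_on_def
proof (intro conjI ballI allI impI)
  fix x y :: "real^'d" and u v :: real
  assume u: "u \<ge> 0" and v: "v \<ge> 0" and uv: "u + v = 1"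
  define p where "p = k \<bullet> x"
  define q where "q = k \<bullet> y"
  have e: "u * p^2 + v * q^2 - (u * p + v * q)^2 = u * v * (p - q)^2"
  proof -
    have vv: "v = 1 - u" using uv by simp
    show ?thesis unfolding vv by (simp add: power2_eq_square algebra_simps)
  qed
  have "(u * p + v * q)^2 \<le> u * p^2 + v * q^2" proof -
    have "0 \<le> u * v * (p - q)^2" using u v by simp
    then show ?thesis using e by linarith
  qed
  then show "b \<bullet> (u *\<^sub>R x + v *\<^sub>R y) + (k \<bullet> (u *\<^sub>R x + v *\<^sub>R y))\<^sup>2
         \<le> u * (b \<bullet> x + (k \<bullet> x)\<^sup>2) + v * (b \<bullet> y + (k \<bullet> y)\<^sup>2)"
    by (simp add: p_def q_def inner_add_right algebra_simps)
qed simp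


theorem proposition3:
  fixes Stationary :: "real^'d \<Rightarrow> ('n::finite \<Rightarrow> real^'d) \<Rightarrow> bool"
  assumes "1 < CARD('n)" and "CARD('n) \<le> CARD('d)"
    and necessary: "\<And>f0 F x g0 G.
        smooth_fun f0 \<Longrightarrow> (\<forall>i. smooth_fun (F i) \<and> strongly_convex (F i)) \<Longrightarrow>
        preference_optimal f0 F x \<Longrightarrow>
        (f0 has_derivative (\<lambda>h. g0 \<bullet> h)) (at x) \<Longrightarrow>
        (\<forall>i. (F i has_derivative (\<lambda>h. G i \<bullet> h)) (at x)) \<Longrightarrow>
        Stationary g0 G"
    and "preference_generic v0 v"
  shows "Stationary v0 v"
proof -
  from assms(4) obtain \<beta> where \<beta>: "\<beta> \<in> weight_simplex" "(\<Sum>i\<in>UNIV. \<beta> i *\<^sub>R v i) = 0"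
    and v0ns: "v0 \<notin> span (range v)"
    unfolding preference_generic_def by blast
  obtain y u where y: "y \<in> span (range v)" and uo: "\<And>w. w \<in> span (range v) \<Longrightarrow> orthogonal u w"
    and v0yu: "v0 = y + u"
    using orthogonal_subspace_decomp_exists by blast
  have "u \<noteq> 0" using v0ns y v0yu by auto
  define s where "s = u \<bullet> u"
  have s0: "s > 0" using \<open>u \<noteq> 0\<close> by (simp add: s_def)
  have vu: "v i \<bullet> u = 0" for i using uo[of "v i"] by (simp add: span_base orthogonal_def inner_commute)
  have v0u: "v0 \<bullet> u = s" using uo[OF y] by (simp add: v0yu s_def orthogonal_def inner_add_right inner_commute)
  define k where "k = v0 - (1/2) *\<^sub>R u"
  have ku: "k \<bullet> u = s / 2" by (simp add: k_def inner_diff_left v0u s_def)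
  define F where "F = (\<lambda>i. quadf 0 (v i) (s/4) k)"
  define f0 where "f0 = quadf 0 v0 0 0"
  have Fx: "F i x = v i \<bullet> x + s/4 * (x \<bullet> x) + (k \<bullet> x)^2" for i x by (simp add: F_def quadf_def)
  have Fi: "smooth_fun (F i) \<and> strongly_convex (F i)" for i
  proof
    show "smooth_fun (F i)" unfolding F_def by (rule quadf_smooth)
    have eq: "(\<lambda>x. F i x - (s/2) / 2 * (norm x)\<^sup>2) = (\<lambda>x. v i \<bullet> x + (k \<bullet> x)^2)"
      by (auto simp: Fx power2_norm_eq_inner)
    show "strongly_convex (F i)" unfolding strongly_convex_def
    proof (intro exI[of _ "s/2"] conjI)
      show "s/2 > 0" using s0 by simp
      show "convex_on UNIV (\<lambda>x. F i x - (s/2) / 2 * (norm x)\<^sup>2)" unfolding eq by (rule convex_lin_sq)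
    qed
  qed
  have dF: "(F i has_derivative (\<lambda>h. v i \<bullet> h)) (at 0)" for i
    using quadf_deriv[of 0 "v i" "s/4" k 0] by (simp add: F_def)
  have df0: "(f0 has_derivative (\<lambda>h. v0 \<bullet> h)) (at 0)"
    using quadf_deriv[of 0 v0 0 0 0] by (simp add: f0_def)
  have F0: "F i 0 = 0" for i by (simp add: Fx)
  have dom: "F j (x - ((v0 \<bullet> x)/s) *\<^sub>R u) = F j x - (v0 \<bullet> x)^2/2" for j x
  proof -
    define t where "t = v0 \<bullet> x"
    define p where "p = u \<bullet> x"
    have kx: "k \<bullet> x = t - p/2" by (simp add: k_def t_def p_def inner_diff_left)
    have e1: "v j \<bullet> (x - (t/s) *\<^sub>R u) = v j \<bullet> x" by (simp add: inner_diff_right vu)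
    have e2: "(x - (t/s) *\<^sub>R u) \<bullet> (x - (t/s) *\<^sub>R u) = x \<bullet> x - 2 * (t / s) * p + (t / s)^2 * s"
      by (simp add: inner_diff_left inner_diff_right p_def s_def inner_commute power2_eq_square algebra_simps)
    have e3: "k \<bullet> (x - (t/s) *\<^sub>R u) = t/2 - p/2"
      using s0 by (simp add: inner_diff_right ku kx)
    show ?thesis unfolding Fx e1 e2 e3 t_def[symmetric] kx using s0
      by (simp add: field_simps power2_eq_square)
  qed
  have par0: "0 \<in> Pareto F"
    unfolding Pareto_def
  proof (intro CollectI allI impI)
    fix x' assume "\<exists>i. F i x' < F i 0"
    then obtain i where "F i x' < 0" using F0 by auto
    then have "x' \<noteq> 0" using F0 by auto
    have "(\<Sum>j\<in>UNIV. \<beta> j * F j x') = (\<Sum>j\<in>UNIV. \<beta> j *\<^sub>R v j) \<bullet> x' + (\<Sum>j\<in>UNIV. \<beta> j) * (s/4 * (x' \<bullet> x') + (k \<bullet> x')^2)"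
    proof -
      define Q where "Q = s/4 * (x' \<bullet> x') + (k \<bullet> x')^2"
      have "(\<Sum>j\<in>UNIV. \<beta> j * F j x') = (\<Sum>j\<in>UNIV. (\<beta> j *\<^sub>R v j) \<bullet> x' + \<beta> j * Q)"
        by (rule sum.cong) (auto simp: Fx Q_def distrib_left)
      also have "\<dots> = (\<Sum>j\<in>UNIV. \<beta> j *\<^sub>R v j) \<bullet> x' + (\<Sum>j\<in>UNIV. \<beta> j) * Q"
        by (simp add: sum.distrib inner_sum_left sum_distrib_right)
      finally show ?thesis by (simp add: Q_def)
    qed
    also have "\<dots> = s/4 * (x' \<bullet> x') + (k \<bullet> x')^2" using \<beta> by (simp add: weight_simplex_def)
    also have "\<dots> > 0" using s0 \<open>x' \<noteq> 0\<close>
      by (simp add: add_pos_nonneg)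
    finally have pos: "(\<Sum>j\<in>UNIV. \<beta> j * F j x') > 0" .
    obtain j where "\<beta> j * F j x' > 0"
    proof (rule ccontr)
      assume "\<not> thesis"
      then have "\<forall>j. \<beta> j * F j x' \<le> 0" using that by (meson not_le)
      then have "(\<Sum>j\<in>UNIV. \<beta> j * F j x') \<le> 0" by (simp add: sum_nonpos)
      then show False using pos by simp
    qed
    moreover have "\<beta> j \<ge> 0" using \<beta> by (simp add: weight_simplex_def)
    ultimately have "F j x' > 0" by (meson mult_nonneg_nonpos not_le)
    then show "\<exists>j. F j 0 < F j x'" using F0 by auto
  qed
  have "preference_optimal f0 F 0"
    unfolding preference_optimal_def
  proof (intro conjI ballI par0)
    fix x' assume px: "x' \<in> Pareto F"
    have "v0 \<bullet> x' = 0"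
    proof (rule ccontr)
      assume ne: "v0 \<bullet> x' \<noteq> 0"
      define x'' where "x'' = x' - ((v0 \<bullet> x')/s) *\<^sub>R u"
      have lt: "F j x'' < F j x'" for j using dom[of j x'] ne by (simp add: x''_def)
      from px have "\<exists>j. F j x' < F j x''" unfolding Pareto_def using lt by blast
      then show False using lt by (meson less_asym)
    qed
    then show "f0 0 \<le> f0 x'" by (simp add: f0_def quadf_def)
  qed
  show ?thesis
    by (rule necessary[OF quadf_smooth[of 0 v0 0 0, folded f0_def] allI[OF Fi] \<open>preference_optimal f0 F 0\<close> df0 allI[OF dF]])
qed

end
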